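(* For every integer $n \geq 1$, $$\sum_{\pi \vdash n} t(\pi) = \sum_{\pi \in V} (-1)^{h(\pi)}\, p(n - |\pi|).$$
   Context: $p(m)$ is the number of partitions of $m$, with $p(0)=1$ and $p(m)=0$ for $m<0$; $|\pi|$ is the sum of the parts of $\pi$. For a partition $\pi$, $f_i$ denotes the number of times $i$ appears as a part, and $t(\pi)$ is the nonnegative integer such that $f_i$ is odd for all $1 \leq i \leq t(\pi)$ and $f_{t(\pi)+1}$ is even (possibly zero). A $C$-partition is a partition $\pi$ such that whenever $i$ is a part of $\pi$, every positive integer less than $i$ is also a part of $\pi$. $V$ is the set of all nonempty $C$-partitions. For a partition $\pi$, $h(\pi)$ is the number of distinct part sizes of $\pi$ that occur with an even (positive) frequency. *)

theory Defs
  imports Main "HOL-Library.Multiset"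
begin

definition partitions :: "nat \<Rightarrow> nat multiset set" where
  "partitions n = {M. (\<forall>x\<in>#M. 0 < x) \<and> sum_mset M = n}"

definition p :: "int \<Rightarrow> nat" where
  "p m = (if m < 0 then 0 else card (partitions (nat m)))"

definition t :: "nat multiset \<Rightarrow> nat" where
  "t M = (THE k. (\<forall>i. 1 \<le> i \<and> i \<le> k \<longrightarrow> odd (count M i)) \<and> even (count M (k + 1)))"

definition is_C_partition :: "nat multiset \<Rightarrow> bool" where
  "is_C_partition M \<longleftrightarrow> (\<forall>x\<in>#M. 0 < x) \<and> (\<forall>i\<in>#M. \<forall>j. 0 < j \<and> j < i \<longrightarrow> j \<in># M)"

definition V :: "nat multiset set" where
  "V = {M. is_C_partition M \<and> M \<noteq> {#}}"

definition h :: "nat multiset \<Rightarrow> nat" where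
  "h M = card {i. i \<in># M \<and> even (count M i)}"

end

theory Submission
  imports Defs
begin

lemma fin_msets: "finite S \<Longrightarrow> finite {M. set_mset M \<subseteq> S \<and> size M \<le> k}"
proof -
  assume S: "finite S"
  have "{M. set_mset M \<subseteq> S \<and> size M \<le> k} \<subseteq> mset ` {xs. set xs \<subseteq> S \<and> length xs \<le> k}"
  proof
    fix M assume "M \<in> {M. set_mset M \<subseteq> S \<and> size M \<le> k}"
    moreover obtain xs where "mset xs = M" using ex_mset by blast
    ultimately show "M \<in> mset ` {xs. set xs \<subseteq> S \<and> length xs \<le> k}" by auto
  qed
  moreover have "finite {xs. set xs \<subseteq> S \<and> length xs \<le> k}"
    using finite_lists_length_le[OF S] by simp
  ultimately show ?thesis by (meson finite_surj)
qed

lemma mem_le_sum: "(x::nat) \<in># M \<Longrightarrow> x \<le> sum_mset M"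
  by (metis le_add1 sum_mset.remove)

lemma size_le_sum: "(\<forall>x\<in>#M. 0 < (x::nat)) \<Longrightarrow> size M \<le> sum_mset M"
  by (induction M) auto

lemma fin_sub: "finite {\<sigma>. \<sigma> \<subseteq># (\<pi>::nat multiset)}"
  apply (rule finite_subset[OF _ fin_msets[of "set_mset \<pi>" "size \<pi>"]])
  by (auto simp: size_mset_mono dest: mset_subset_eqD)

lemma fin_parts: "finite {M. (\<forall>x\<in>#M. 0 < (x::nat)) \<and> sum_mset M \<le> n}"
  apply (rule finite_subset[OF _ fin_msets[of "{1..n}" n]])
  using mem_le_sum size_le_sum
  apply force by simp

lemma fin_partitions: "finite (partitions n)"
  by (rule finite_subset[OF _ fin_parts[of n]]) (auto simp: partitions_def)

lemma t_char:
  fixes \<pi> :: "nat multiset"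
  shows "(\<forall>i. 1 \<le> i \<and> i \<le> m \<longrightarrow> odd (count \<pi> i)) \<longleftrightarrow> m \<le> t \<pi>"
proof -
  define k0 where "k0 = (LEAST k. even (count \<pi> (k+1)))"
  have K: "sum_mset \<pi> + 1 \<notin># \<pi>" using mem_le_sum by fastforce
  have ex: "\<exists>k. even (count \<pi> (k+1))" using K by (metis count_eq_zero_iff even_zero)
  have e0: "even (count \<pi> (k0+1))" unfolding k0_def using LeastI_ex[OF ex] .
  have o0: "odd (count \<pi> i)" if "1 \<le> i" "i \<le> k0" for i
  proof -
    have "i - 1 < k0" using that by simp
    then have "\<not> even (count \<pi> (i - 1 + 1))" unfolding k0_def by (rule not_less_Least)
    then show ?thesis using that by simp
  qed
  have "t \<pi> = k0" unfolding t_def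
  proof (rule the_equality)
    show "(\<forall>i. 1 \<le> i \<and> i \<le> k0 \<longrightarrow> odd (count \<pi> i)) \<and> even (count \<pi> (k0 + 1))"
      using o0 e0 by blast
  next
    fix k assume k: "(\<forall>i. 1 \<le> i \<and> i \<le> k \<longrightarrow> odd (count \<pi> i)) \<and> even (count \<pi> (k + 1))"
    show "k = k0"
    proof (rule ccontr)
      assume "k \<noteq> k0"
      then consider "k < k0" | "k0 < k" by linarith
      then show False
      proof cases
        case 1 then show ?thesis using o0[of "k+1"] k by simp
      next
        case 2 then show ?thesis using k e0 by (metis Suc_eq_plus1 Suc_leI le_add2)
      qed
    qed
  qed
  then show ?thesis
  proof (intro iffI)
    assume "\<forall>i. 1 \<le> i \<and> i \<le> m \<longrightarrow> odd (count \<pi> i)"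
    then show "m \<le> t \<pi>" using e0 \<open>t \<pi> = k0\<close>
      by (metis add.commute le_add1 not_less_eq_eq plus_1_eq_Suc)
  qed (use o0 in auto)
qed

definition A :: "nat multiset \<Rightarrow> nat \<Rightarrow> nat multiset set" where
  "A \<pi> m = {\<sigma>. set_mset \<sigma> = {1..m} \<and> \<sigma> \<subseteq># \<pi>}"

definition f :: "nat multiset \<Rightarrow> nat \<Rightarrow> int" where
  "f \<sigma> m = (\<Prod>i\<in>{1..m}. if even (count \<sigma> i) then -1 else 1)"

lemma altsum: "(\<Sum>g\<in>{1..(c::nat)}. (if even g then -1 else 1::int)) = (if odd c then 1 else 0)"
  by (induction c) auto

lemma A_Suc: "A \<pi> (Suc m) = (\<lambda>(\<sigma>,g). \<sigma> + replicate_mset g (Suc m)) ` (A \<pi> m \<times> {1..count \<pi> (Suc m)})"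
proof
  show "A \<pi> (Suc m) \<subseteq> (\<lambda>(\<sigma>,g). \<sigma> + replicate_mset g (Suc m)) ` (A \<pi> m \<times> {1..count \<pi> (Suc m)})"
  proof
    fix \<tau> assume \<tau>: "\<tau> \<in> A \<pi> (Suc m)"
    define \<sigma> where "\<sigma> = filter_mset (\<lambda>x. x \<noteq> Suc m) \<tau>"
    define g where "g = count \<tau> (Suc m)"
    have eq: "\<tau> = \<sigma> + replicate_mset g (Suc m)"
      unfolding \<sigma>_def g_def by (auto simp: multiset_eq_iff)
    have sub: "\<tau> \<subseteq># \<pi>" and st: "set_mset \<tau> = {1..Suc m}" using \<tau> by (auto simp: A_def)
    have "set_mset \<sigma> = {1..m}" unfolding \<sigma>_def using st by auto
    moreover have "\<sigma> \<subseteq># \<pi>" unfolding \<sigma>_def using sub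
      using multiset_filter_subset subset_mset.order_trans by blast
    moreover have "1 \<le> g" unfolding g_def using st
      by (metis atLeastAtMost_iff count_eq_zero_iff le_add1 less_one not_less plus_1_eq_Suc le_refl)
    moreover have "g \<le> count \<pi> (Suc m)" unfolding g_def using sub by (simp add: mset_subset_eq_count)
    ultimately show "\<tau> \<in> (\<lambda>(\<sigma>,g). \<sigma> + replicate_mset g (Suc m)) ` (A \<pi> m \<times> {1..count \<pi> (Suc m)})"
      using eq by (auto simp: A_def intro!: image_eqI[of _ _ "(\<sigma>,g)"])
  qed
next
  show "(\<lambda>(\<sigma>,g). \<sigma> + replicate_mset g (Suc m)) ` (A \<pi> m \<times> {1..count \<pi> (Suc m)}) \<subseteq> A \<pi> (Suc m)"
  proof clarify
    fix \<sigma> g assume s: "\<sigma> \<in> A \<pi> m" and g: "g \<in> {1..count \<pi> (Suc m)}"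
    have st: "set_mset \<sigma> = {1..m}" and sub: "\<sigma> \<subseteq># \<pi>" using s by (auto simp: A_def)
    have c0: "count \<sigma> (Suc m) = 0" using st by (simp add: count_eq_zero_iff)
    have "set_mset (\<sigma> + replicate_mset g (Suc m)) = {1..Suc m}" using st g by auto
    moreover have "\<sigma> + replicate_mset g (Suc m) \<subseteq># \<pi>"
      unfolding subseteq_mset_def
    proof
      fix a show "count (\<sigma> + replicate_mset g (Suc m)) a \<le> count \<pi> a"
        using sub g c0 by (cases "a = Suc m") (auto simp: mset_subset_eq_count)
    qed
    ultimately show "\<sigma> + replicate_mset g (Suc m) \<in> A \<pi> (Suc m)" by (simp add: A_def)
  qed
qed

lemma A_inj: "inj_on (\<lambda>(\<sigma>,g). \<sigma> + replicate_mset g (Suc m)) (A \<pi> m \<times> X)"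
proof (rule inj_onI, clarify)
  fix \<sigma> g \<sigma>' g' assume s: "\<sigma> \<in> A \<pi> m" "\<sigma>' \<in> A \<pi> m"
    and e: "\<sigma> + replicate_mset g (Suc m) = \<sigma>' + replicate_mset g' (Suc m)"
  have c0: "count \<sigma> (Suc m) = 0" "count \<sigma>' (Suc m) = 0" using s by (auto simp: A_def count_eq_zero_iff)
  have "g = g'" using arg_cong[OF e, of "\<lambda>M. count M (Suc m)"] c0 by simp
  then show "\<sigma> = \<sigma>' \<and> g = g'" using e by simp
qed

lemma f_step: "\<sigma> \<in> A \<pi> m \<Longrightarrow>
   f (\<sigma> + replicate_mset g (Suc m)) (Suc m) = f \<sigma> m * (if even g then -1 else 1)"
proof -
  assume s: "\<sigma> \<in> A \<pi> m"
  have c0: "count \<sigma> (Suc m) = 0" using s by (auto simp: A_def count_eq_zero_iff)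
  have "f (\<sigma> + replicate_mset g (Suc m)) (Suc m) =
     (\<Prod>i\<in>{1..m}. if even (count (\<sigma> + replicate_mset g (Suc m)) i) then -1 else 1) *
     (if even g then -1 else 1)"
    unfolding f_def using c0 by (simp add: prod.nat_ivl_Suc' mult.commute)
  also have "(\<Prod>i\<in>{1..m}. if even (count (\<sigma> + replicate_mset g (Suc m)) i) then -1 else (1::int)) = f \<sigma> m"
    unfolding f_def by (rule prod.cong) auto
  finally show ?thesis .
qed

lemma A_fin: "finite (A \<pi> m)"
  by (rule finite_subset[OF _ fin_sub[of \<pi>]]) (auto simp: A_def)

lemma A_sum: "(\<Sum>\<sigma>\<in>A \<pi> m. f \<sigma> m) = (if \<forall>i\<in>{1..m}. odd (count \<pi> i) then 1 else 0)"
proof (induction m)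
  case 0
  have "A \<pi> 0 = {{#}}" by (auto simp: A_def)
  then show ?case by (simp add: f_def)
next
  case (Suc m)
  have "(\<Sum>\<sigma>\<in>A \<pi> (Suc m). f \<sigma> (Suc m)) =
        (\<Sum>x\<in>A \<pi> m \<times> {1..count \<pi> (Suc m)}. f ((\<lambda>(\<sigma>,g). \<sigma> + replicate_mset g (Suc m)) x) (Suc m))"
    unfolding A_Suc using sum.reindex[OF A_inj, of "\<lambda>\<sigma>. f \<sigma> (Suc m)" m \<pi> "{1..count \<pi> (Suc m)}"]
    by (simp add: comp_def)
  also have "\<dots> = (\<Sum>x\<in>A \<pi> m \<times> {1..count \<pi> (Suc m)}. f (fst x) m * (if even (snd x) then -1 else 1))"
    by (rule sum.cong) (auto simp: f_step)
  also have "\<dots> = (\<Sum>\<sigma>\<in>A \<pi> m. f \<sigma> m) * (\<Sum>g\<in>{1..count \<pi> (Suc m)}. (if even g then -1 else 1))"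
    by (simp add: sum_product sum.cartesian_product split_def)
  also have "\<dots> = (if \<forall>i\<in>{1..Suc m}. odd (count \<pi> i) then 1 else 0)"
    unfolding Suc altsum apply (auto simp: le_Suc_eq)
    by (rule bexI[of _ "Suc m"]) auto
  finally show ?case .
qed

lemma h_f: "\<sigma> \<in> A \<pi> m \<Longrightarrow> (-1::int) ^ h \<sigma> = f \<sigma> m"
proof -
  assume s: "\<sigma> \<in> A \<pi> m"
  then have st: "set_mset \<sigma> = {1..m}" by (simp add: A_def)
  have "{i. i \<in># \<sigma> \<and> even (count \<sigma> i)} = {1..m} \<inter> {i. even (count \<sigma> i)}" using st by auto
  then have "h \<sigma> = card ({1..m} \<inter> {i. even (count \<sigma> i)})" by (simp add: h_def)
  moreover have "f \<sigma> m = (-1) ^ card ({1..m} \<inter> {i. even (count \<sigma> i)})"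
    unfolding f_def by (simp add: prod.If_cases)
  ultimately show ?thesis by simp
qed

lemma t_le: "t \<pi> \<le> sum_mset \<pi>"
proof (cases "t \<pi> = 0")
  case False
  then have "odd (count \<pi> (t \<pi>))" using t_char[of "t \<pi>" \<pi>] by simp
  then have "t \<pi> \<in># \<pi>" by (metis count_eq_zero_iff even_zero)
  then show ?thesis by (rule mem_le_sum)
qed simp

lemma inner: "(\<Sum>\<sigma>\<in>{\<sigma>\<in>V. \<sigma> \<subseteq># (\<pi>::nat multiset)}. (-1::int) ^ h \<sigma>) = int (t \<pi>)"
proof -
  define N where "N = sum_mset \<pi>"
  have U: "{\<sigma>\<in>V. \<sigma> \<subseteq># \<pi>} = (\<Union>m\<in>{1..N}. A \<pi> m)"
  proof
    show "{\<sigma>\<in>V. \<sigma> \<subseteq># \<pi>} \<subseteq> (\<Union>m\<in>{1..N}. A \<pi> m)"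
    proof clarify
      fix \<sigma> assume v: "\<sigma> \<in> V" and sub: "\<sigma> \<subseteq># \<pi>"
      have C: "is_C_partition \<sigma>" and ne: "\<sigma> \<noteq> {#}" using v by (auto simp: V_def)
      define m where "m = Max (set_mset \<sigma>)"
      have mi: "m \<in># \<sigma>" unfolding m_def using ne by (simp add: Max_in)
      have "set_mset \<sigma> = {1..m}"
      proof
        show "set_mset \<sigma> \<subseteq> {1..m}"
        proof
          fix x assume x: "x \<in># \<sigma>"
          then have "0 < x" using C unfolding is_C_partition_def by blast
          moreover have "x \<le> m" unfolding m_def using x by simp
          ultimately show "x \<in> {1..m}" by simp
        qed
        show "{1..m} \<subseteq> set_mset \<sigma>"
        proof
          fix j assume j: "j \<in> {1..m}"
          show "j \<in># \<sigma>"
          proof (cases "j = m")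
            case True then show ?thesis using mi by simp
          next
            case False
            then have "0 < j \<and> j < m" using j by auto
            then show ?thesis using C mi unfolding is_C_partition_def by blast
          qed
        qed
      qed
      moreover have "0 < m" using C mi unfolding is_C_partition_def by blast
      moreover have "m \<le> N" unfolding N_def using mi sub
        by (meson mem_le_sum mset_subset_eqD)
      ultimately have "\<sigma> \<in> A \<pi> m" "m \<in> {1..N}" using sub by (auto simp: A_def)
      then show "\<sigma> \<in> (\<Union>m\<in>{1..N}. A \<pi> m)" by blast
    qed
    show "(\<Union>m\<in>{1..N}. A \<pi> m) \<subseteq> {\<sigma>\<in>V. \<sigma> \<subseteq># \<pi>}"
    proof
      fix \<sigma> assume "\<sigma> \<in> (\<Union>m\<in>{1..N}. A \<pi> m)"
      then obtain m where m: "m \<in> {1..N}" and s: "\<sigma> \<in> A \<pi> m" by blast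
      have st: "set_mset \<sigma> = {1..m}" and sub: "\<sigma> \<subseteq># \<pi>" using s by (auto simp: A_def)
      have "is_C_partition \<sigma>" unfolding is_C_partition_def using st by auto
      moreover have "\<sigma> \<noteq> {#}" using st m by auto
      ultimately show "\<sigma> \<in> {\<sigma>\<in>V. \<sigma> \<subseteq># \<pi>}" using sub by (simp add: V_def)
    qed
  qed
  have disj: "\<forall>m\<in>{1..N}. \<forall>m'\<in>{1..N}. m \<noteq> m' \<longrightarrow> A \<pi> m \<inter> A \<pi> m' = {}"
  proof (intro ballI impI)
    fix m m' assume "m \<in> {1..N}" "m' \<in> {1..N}" "m \<noteq> m'"
    then have ne: "{1..m} \<noteq> {1..m'}" by (simp add: Icc_eq_Icc)
    show "A \<pi> m \<inter> A \<pi> m' = {}"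
    proof (rule ccontr)
      assume "A \<pi> m \<inter> A \<pi> m' \<noteq> {}"
      then obtain \<sigma> where "set_mset \<sigma> = {1..m}" "set_mset \<sigma> = {1..m'}" by (auto simp: A_def)
      then show False using ne by simp
    qed
  qed
  have "(\<Sum>\<sigma>\<in>{\<sigma>\<in>V. \<sigma> \<subseteq># \<pi>}. (-1::int) ^ h \<sigma>) = (\<Sum>m\<in>{1..N}. \<Sum>\<sigma>\<in>A \<pi> m. (-1::int) ^ h \<sigma>)"
    unfolding U by (rule sum.UNION_disjoint) (auto simp: A_fin disj)
  also have "\<dots> = (\<Sum>m\<in>{1..N}. \<Sum>\<sigma>\<in>A \<pi> m. f \<sigma> m)"
    by (intro sum.cong refl) (simp add: h_f)
  also have "\<dots> = (\<Sum>m\<in>{1..N}. if m \<le> t \<pi> then 1 else 0)"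
  proof (intro sum.cong refl)
    fix m
    have "(\<forall>i\<in>{1..m}. odd (count \<pi> i)) \<longleftrightarrow> m \<le> t \<pi>" using t_char[of m \<pi>] by auto
    then show "(\<Sum>\<sigma>\<in>A \<pi> m. f \<sigma> m) = (if m \<le> t \<pi> then 1 else 0)" by (simp add: A_sum)
  qed
  also have "\<dots> = (\<Sum>m\<in>{m\<in>{1..N}. m \<le> t \<pi>}. 1)"
    by (rule sum.inter_filter[symmetric]) simp
  also have "{m\<in>{1..N}. m \<le> t \<pi>} = {1..t \<pi>}" using t_le[of \<pi>] unfolding N_def by auto
  finally show ?thesis by simp
qed

theorem mainTheorem5:
  fixes n :: nat
  assumes "n \<ge> 1"
  shows "(\<Sum>\<pi>\<in>partitions n. int (t \<pi>)) =
         (\<Sum>\<pi>\<in>{\<pi>\<in>V. sum_mset \<pi> \<le> n}. (-1) ^ h \<pi> * int (p (int n - int (sum_mset \<pi>))))"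
proof -
  define W where "W = {\<pi>\<in>V. sum_mset \<pi> \<le> n}"
  define B where "B = (\<lambda>\<sigma>::nat multiset. partitions (n - sum_mset \<sigma>))"
  define C where "C = (\<lambda>\<pi>::nat multiset. {\<sigma>\<in>V. \<sigma> \<subseteq># \<pi>})"
  have Vpos: "\<sigma> \<in> V \<Longrightarrow> \<forall>x\<in>#\<sigma>. 0 < x" for \<sigma> by (simp add: V_def is_C_partition_def)
  have finW: "finite W"
    by (rule finite_subset[OF _ fin_parts[of n]]) (auto simp: W_def Vpos)
  have finB: "\<forall>\<sigma>\<in>W. finite (B \<sigma>)" by (simp add: B_def fin_partitions)
  have finC: "\<forall>\<pi>\<in>partitions n. finite (C \<pi>)"
    by (auto simp: C_def intro: finite_subset[OF _ fin_sub])
  have "(\<Sum>\<pi>\<in>W. (-1) ^ h \<pi> * int (p (int n - int (sum_mset \<pi>)))) =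
        (\<Sum>\<sigma>\<in>W. \<Sum>\<rho>\<in>B \<sigma>. (-1::int) ^ h \<sigma>)"
  proof (rule sum.cong[OF refl])
    fix \<sigma> assume "\<sigma> \<in> W"
    then have "sum_mset \<sigma> \<le> n" by (simp add: W_def)
    then have e: "int n - int (sum_mset \<sigma>) = int (n - sum_mset \<sigma>)" by (simp only: of_nat_diff)
    have "p (int n - int (sum_mset \<sigma>)) = card (B \<sigma>)"
      unfolding e p_def B_def by simp
    then show "(-1) ^ h \<sigma> * int (p (int n - int (sum_mset \<sigma>))) = (\<Sum>\<rho>\<in>B \<sigma>. (-1::int) ^ h \<sigma>)"
      by simp
  qed
  also have "\<dots> = (\<Sum>x\<in>Sigma W B. (-1::int) ^ h (fst x))"
    using sum.Sigma[OF finW finB, of "\<lambda>\<sigma> \<rho>. (-1::int) ^ h \<sigma>"] by (simp add: split_def)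
  also have "\<dots> = (\<Sum>y\<in>Sigma (partitions n) C. (-1::int) ^ h (snd y))"
  proof (rule sum.reindex_bij_witness[where i = "\<lambda>(\<pi>,\<sigma>). (\<sigma>, \<pi> - \<sigma>)" and j = "\<lambda>(\<sigma>,\<rho>). (\<sigma> + \<rho>, \<sigma>)"])
    fix a assume "a \<in> Sigma W B"
    then obtain \<sigma> \<rho> where a: "a = (\<sigma>,\<rho>)" "\<sigma> \<in> V" "sum_mset \<sigma> \<le> n" "\<rho> \<in> partitions (n - sum_mset \<sigma>)"
      by (auto simp: W_def B_def)
    show "(case case a of (\<sigma>, \<rho>) \<Rightarrow> (\<sigma> + \<rho>, \<sigma>) of (\<pi>, \<sigma>) \<Rightarrow> (\<sigma>, \<pi> - \<sigma>)) = a"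
      using a by simp
    show "(case a of (\<sigma>, \<rho>) \<Rightarrow> (\<sigma> + \<rho>, \<sigma>)) \<in> Sigma (partitions n) C"
      using a Vpos[of \<sigma>] by (auto simp: partitions_def C_def)
    show "(-1::int) ^ h (snd (case a of (\<sigma>, \<rho>) \<Rightarrow> (\<sigma> + \<rho>, \<sigma>))) = (-1) ^ h (fst a)"
      using a by simp
  next
    fix b assume "b \<in> Sigma (partitions n) C"
    then obtain \<pi> \<sigma> where b: "b = (\<pi>,\<sigma>)" "\<pi> \<in> partitions n" "\<sigma> \<in> V" "\<sigma> \<subseteq># \<pi>"
      by (auto simp: C_def)
    have eq: "\<pi> = \<sigma> + (\<pi> - \<sigma>)" using b(4) by simp
    have ps: "sum_mset \<pi> = n" and pp: "\<forall>x\<in>#\<pi>. 0 < x" using b(2) by (auto simp: partitions_def)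
    have sm: "sum_mset \<pi> = sum_mset \<sigma> + sum_mset (\<pi> - \<sigma>)" by (subst eq) simp
    show "(case case b of (\<pi>, \<sigma>) \<Rightarrow> (\<sigma>, \<pi> - \<sigma>) of (\<sigma>, \<rho>) \<Rightarrow> (\<sigma> + \<rho>, \<sigma>)) = b"
      using b by simp
    have "\<forall>x\<in>#\<pi> - \<sigma>. 0 < x" using pp by (meson in_diffD)
    then show "(case b of (\<pi>, \<sigma>) \<Rightarrow> (\<sigma>, \<pi> - \<sigma>)) \<in> Sigma W B"
      using b ps sm by (auto simp: W_def B_def partitions_def)
  qed
  also have "\<dots> = (\<Sum>\<pi>\<in>partitions n. \<Sum>\<sigma>\<in>C \<pi>. (-1::int) ^ h \<sigma>)"
    using sum.Sigma[OF fin_partitions finC, of "\<lambda>\<pi> \<sigma>. (-1::int) ^ h \<sigma>"] by (simp add: split_def)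
  also have "\<dots> = (\<Sum>\<pi>\<in>partitions n. int (t \<pi>))"
    by (rule sum.cong[OF refl]) (simp add: C_def inner)
  finally show ?thesis unfolding W_def by simp
qed

end
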